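(* Let $X$ and $Y$ be random variables with values in $\mathbb{N}=\{1,2,\dots\}$ whose probability mass functions are non-increasing on $\mathbb{N}$. If $X\le_{st}Y$ (i.e. $\Pr(X>t)\le\Pr(Y>t)$ for all $t\in\mathbb{R}$), then $X\le_{wd}Y$.
   Context: For a real random variable $X$, its Lévy concentration function is $Q_X(\varepsilon)=\sup_{x_0\in\mathbb{R}}\Pr\{X\in[x_0,x_0+\varepsilon]\}$, $\varepsilon>0$. For random variables $X,Y$, write $X\le_{wd}Y$ if $Q_X(\varepsilon)\ge Q_Y(\varepsilon)$ for all $\varepsilon>0$. *)

theory Defs
  imports "HOL-Probability.Probability"
begin

definition levy_conc :: "'a measure \<Rightarrow> ('a \<Rightarrow> real) \<Rightarrow> real \<Rightarrow> real" where
  "levy_conc M X \<epsilon> = (SUP x0::real. measure M {\<omega> \<in> space M. X \<omega> \<in> {x0..x0 + \<epsilon>}})"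

definition le_wd :: "'a measure \<Rightarrow> ('a \<Rightarrow> real) \<Rightarrow> 'b measure \<Rightarrow> ('b \<Rightarrow> real) \<Rightarrow> bool" where
  "le_wd M X N Y \<longleftrightarrow> (\<forall>\<epsilon>>0. levy_conc M X \<epsilon> \<ge> levy_conc N Y \<epsilon>)"

definition le_st :: "'a measure \<Rightarrow> ('a \<Rightarrow> real) \<Rightarrow> 'b measure \<Rightarrow> ('b \<Rightarrow> real) \<Rightarrow> bool" where
  "le_st M X N Y \<longleftrightarrow> (\<forall>t::real. measure M {\<omega> \<in> space M. X \<omega> > t} \<le> measure N {\<omega> \<in> space N. Y \<omega> > t})"

end

theory Submission
  imports Defs
begin

lemma pred_sets:
  assumes "X \<in> measurable M (count_space UNIV)"
  shows "{\<omega> \<in> space M. P (X \<omega>)} \<in> sets M"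
proof -
  have "{\<omega> \<in> space M. P (X \<omega>)} = X -` {n. P n} \<inter> space M" by auto
  thus ?thesis using measurable_sets[OF assms, of "{n. P n}"] by simp
qed

lemma pmf_mono:
  fixes p :: "nat \<Rightarrow> real"
  assumes "\<forall>k\<ge>1. p (Suc k) \<le> p k" "1 \<le> j" "j \<le> k"
  shows "p k \<le> p j"
  using assms(3)
proof (induction k rule: dec_induct)
  case base then show ?case by simp
next
  case (step n) then show ?case using assms(1,2) by (meson order_trans)
qed

lemma key:
  fixes N :: "'b measure" and Y :: "'b \<Rightarrow> nat"
  assumes ps: "prob_space N"
    and ym: "Y \<in> measurable N (count_space UNIV)"
    and y1: "\<forall>\<omega>\<in>space N. Y \<omega> \<ge> 1"
    and mono: "\<forall>k\<ge>1. measure N {\<omega> \<in> space N. Y \<omega> = Suc k} \<le> measure N {\<omega> \<in> space N. Y \<omega> = k}"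
    and e: "\<epsilon> > 0"
  shows "measure N {\<omega> \<in> space N. real (Y \<omega>) \<in> {x0..x0+\<epsilon>}}
     \<le> measure N {\<omega> \<in> space N. real (Y \<omega>) \<in> {1..1+\<epsilon>}}"
proof -
  interpret prob_space N by fact
  define D where "D = distr N (count_space UNIV) Y"
  interpret D: prob_space D unfolding D_def by (rule prob_space_distr[OF ym])
  define p where "p k = measure N {\<omega> \<in> space N. Y \<omega> = k}" for k
  have meas: "measure N {\<omega> \<in> space N. Y \<omega> \<in> K} = sum p K" if "finite K" for K
  proof -
    have "measure D K = (\<Sum>x\<in>K. measure D {x})"
      using that by (intro D.finite_measure_eq_sum_singleton) (auto simp: D_def)
    moreover have "measure D A = measure N {\<omega> \<in> space N. Y \<omega> \<in> A}" for A
      unfolding D_def using ym by (subst measure_distr) (auto intro: arg_cong[where f="measure N"])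
    ultimately show ?thesis unfolding p_def
      using that by (simp add: D.finite_measure_eq_sum_singleton D_def)
  qed
  have p0: "p 0 = 0" unfolding p_def using y1
    by (metis (mono_tags, lifting) Collect_empty_eq measure_empty not_one_le_zero)
  have pnn: "p k \<ge> 0" for k unfolding p_def by simp
  have pm: "p k \<le> p j" if "1 \<le> j" "j \<le> k" for j k
    using pmf_mono[of p j k] mono that unfolding p_def by blast
  define K where "K = {k::nat. real k \<in> {x0..x0+\<epsilon>}}"
  define K1 where "K1 = {k::nat. real k \<in> {1..1+\<epsilon>}}"
  have fK: "finite K" unfolding K_def
    by (rule finite_subset[of _ "{..nat \<lceil>x0+\<epsilon>\<rceil>}"]) (auto, linarith)
  have fK1: "finite K1" unfolding K1_def
    by (rule finite_subset[of _ "{..nat \<lceil>1+\<epsilon>\<rceil>}"]) (auto, linarith)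
  define a where "a = max 1 (nat \<lceil>x0\<rceil>)"
  define K' where "K' = K - {0}"
  define f where "f k = k + 1 - a" for k
  have Ka: "k \<in> K' \<Longrightarrow> a \<le> k" for k unfolding K'_def K_def a_def by (auto; linarith)
  have a1: "a \<ge> 1" "real a \<ge> x0"
  proof -
    show "a \<ge> 1" unfolding a_def by simp
    have "x0 \<le> real (nat \<lceil>x0\<rceil>)" by (rule real_nat_ceiling_ge)
    also have "\<dots> \<le> real a" unfolding a_def by simp
    finally show "real a \<ge> x0" .
  qed
  have "sum p K = sum p K'" unfolding K'_def using p0 fK
    by (metis add_0 sum.remove sum_diff1 sum.insert_remove insert_Diff_single diff_zero
        Diff_insert_absorb finite_Diff insert_absorb)
  also have "\<dots> \<le> sum (\<lambda>k. p (f k)) K'"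
    using a1 by (intro sum_mono pm) (auto simp: f_def dest: Ka)
  also have "\<dots> = sum p (f ` K')"
  proof -
    have "inj_on f K'" unfolding inj_on_def f_def using Ka by fastforce
    thus ?thesis by (simp add: sum.reindex)
  qed
  also have "\<dots> \<le> sum p K1"
  proof (rule sum_mono2[OF fK1])
    show "f ` K' \<subseteq> K1"
    proof
      fix y assume "y \<in> f ` K'"
      then obtain k where k: "k \<in> K'" "y = f k" by auto
      have "a \<le> k" using Ka k by auto
      moreover have "real k \<le> x0 + \<epsilon>" using k unfolding K'_def K_def by auto
      ultimately show "y \<in> K1" unfolding K1_def k f_def using a1 e by (auto simp: of_nat_diff)
    qed
  qed (use pnn in auto)
  finally have "sum p K \<le> sum p K1" .
  thus ?thesis using meas[OF fK] meas[OF fK1] unfolding K_def K1_def by simp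
qed

theorem proposition3p2:
  fixes M :: "'a measure" and N :: "'b measure"
    and X :: "'a \<Rightarrow> nat" and Y :: "'b \<Rightarrow> nat"
  assumes "prob_space M" and "prob_space N"
    and "X \<in> measurable M (count_space UNIV)"
    and "Y \<in> measurable N (count_space UNIV)"
    and "\<forall>\<omega>\<in>space M. X \<omega> \<ge> 1"
    and "\<forall>\<omega>\<in>space N. Y \<omega> \<ge> 1"
    and "\<forall>k\<ge>1. measure M {\<omega> \<in> space M. X \<omega> = Suc k} \<le> measure M {\<omega> \<in> space M. X \<omega> = k}"
    and "\<forall>k\<ge>1. measure N {\<omega> \<in> space N. Y \<omega> = Suc k} \<le> measure N {\<omega> \<in> space N. Y \<omega> = k}"
    and "le_st M (\<lambda>\<omega>. real (X \<omega>)) N (\<lambda>\<omega>. real (Y \<omega>))"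
  shows "le_wd M (\<lambda>\<omega>. real (X \<omega>)) N (\<lambda>\<omega>. real (Y \<omega>))"
  unfolding le_wd_def levy_conc_def
proof (intro allI impI)
  fix \<epsilon> :: real assume e: "\<epsilon> > 0"
  interpret M: prob_space M by fact
  interpret N: prob_space N by fact
  have cX: "measure M {\<omega> \<in> space M. real (X \<omega>) \<in> {1..1+\<epsilon>}} = 1 - measure M {\<omega> \<in> space M. real (X \<omega>) > 1+\<epsilon>}"
  proof -
    have "{\<omega> \<in> space M. real (X \<omega>) \<in> {1..1+\<epsilon>}} = space M - {\<omega> \<in> space M. real (X \<omega>) > 1+\<epsilon>}"
      using assms(5) by auto
    thus ?thesis using M.prob_compl[OF pred_sets[OF assms(3)]] by simp
  qed
  have cY: "measure N {\<omega> \<in> space N. real (Y \<omega>) \<in> {1..1+\<epsilon>}} = 1 - measure N {\<omega> \<in> space N. real (Y \<omega>) > 1+\<epsilon>}"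
  proof -
    have "{\<omega> \<in> space N. real (Y \<omega>) \<in> {1..1+\<epsilon>}} = space N - {\<omega> \<in> space N. real (Y \<omega>) > 1+\<epsilon>}"
      using assms(6) by auto
    thus ?thesis using N.prob_compl[OF pred_sets[OF assms(4)]] by simp
  qed
  have st: "measure M {\<omega> \<in> space M. real (X \<omega>) > 1+\<epsilon>} \<le> measure N {\<omega> \<in> space N. real (Y \<omega>) > 1+\<epsilon>}"
    using assms(9) unfolding le_st_def by blast
  have bdd: "bdd_above (range (\<lambda>x0. measure M {\<omega> \<in> space M. real (X \<omega>) \<in> {x0..x0 + \<epsilon>}}))"
    by (rule bdd_aboveI[where M=1]) auto
  show "(SUP x0. measure N {\<omega> \<in> space N. real (Y \<omega>) \<in> {x0..x0 + \<epsilon>}})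
        \<le> (SUP x0. measure M {\<omega> \<in> space M. real (X \<omega>) \<in> {x0..x0 + \<epsilon>}})"
  proof (rule cSUP_least)
    fix x0
    have "measure N {\<omega> \<in> space N. real (Y \<omega>) \<in> {x0..x0 + \<epsilon>}}
       \<le> measure N {\<omega> \<in> space N. real (Y \<omega>) \<in> {1..1+\<epsilon>}}"
      by (rule key[OF assms(2,4,6,8) e])
    also have "\<dots> \<le> measure M {\<omega> \<in> space M. real (X \<omega>) \<in> {1..1+\<epsilon>}}"
      using cX cY st by simp
    also have "\<dots> \<le> (SUP x0. measure M {\<omega> \<in> space M. real (X \<omega>) \<in> {x0..x0 + \<epsilon>}})"
      by (rule cSUP_upper2[OF bdd, of 1]) auto
    finally show "measure N {\<omega> \<in> space N. real (Y \<omega>) \<in> {x0..x0 + \<epsilon>}} \<le> \<dots>" .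
  qed simp
qed

end
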